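(* Let $\mathfrak{P}$ be a compactness-like topological property, let $X$ be a space, let $Y$ be an extension of $X$ with compact remainder, let $\zeta Y$ be a compactification of $Y$, and let $\phi:\beta X\to\zeta Y$ be the continuous extension of the identity of $X$. Then $Y\in\mathscr{E}_\mathfrak{P}(X)$ if and only if $X$ is locally-$\mathfrak{P}$ and $\beta X\setminus\lambda_\mathfrak{P}X\subseteq\phi^{-1}[Y\setminus X]$.
   Context: All spaces are completely regular Hausdorff; $\beta X$ is the Stone–Čech compactification. An extension of $X$ is a space containing $X$ as a dense subspace; its remainder is $Y\setminus X$. $\mathscr{E}_\mathfrak{P}(X)$ is the set of all extensions of $X$ with $\mathfrak{P}$ and compact remainder. $X$ is locally-$\mathfrak{P}$ if each point has an open neighborhood whose closure has $\mathfrak{P}$. $\mathrm{Coz}(X)$ is the set of cozero-sets of $X$. $\lambda_\mathfrak{P}X=\bigcup\{\mathrm{int}_{\beta X}\mathrm{cl}_{\beta X}C: C\in\mathrm{Coz}(X),\ \mathrm{cl}_XC\text{ has }\mathfrak{P}\}$. A topological property is compactness-like if it is hereditary to clopen subspaces, finitely additive (finite disjoint unions of closed subspaces with $\mathfrak{P}$ have $\mathfrak{P}$), invariant and inverse invariant under perfect surjections (closed continuous surjections with compact fibers), and satisfies Mrówka's condition (W): if a space $Z$ has a point $p$ with an open base $\mathscr{B}$ at $p$ such that $Z\setminus B$ has $\mathfrak{P}$ for all $B\in\mathscr{B}$, then $Z$ has $\mathfrak{P}$. *)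

theory Defs
  imports "HOL-Analysis.Analysis"
begin

definition tychonoff :: "'a topology \<Rightarrow> bool" where
  "tychonoff X \<longleftrightarrow> completely_regular_space X \<and> Hausdorff_space X"

definition mrowka_W :: "('a topology \<Rightarrow> bool) \<Rightarrow> bool" where
  "mrowka_W P \<longleftrightarrow>
     (\<forall>Z p \<B>. tychonoff Z \<and> p \<in> topspace Z \<and>
        (\<forall>B\<in>\<B>. openin Z B \<and> p \<in> B) \<and>
        (\<forall>U. openin Z U \<and> p \<in> U \<longrightarrow> (\<exists>B\<in>\<B>. B \<subseteq> U)) \<and>
        (\<forall>B\<in>\<B>. P (subtopology Z (topspace Z - B)))
      \<longrightarrow> P Z)"

definition compactness_like :: "('a topology \<Rightarrow> bool) \<Rightarrow> bool" where
  "compactness_like P \<longleftrightarrow>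
     \<comment> \<open>hereditary to clopen subspaces\<close>
     (\<forall>Z A. tychonoff Z \<and> P Z \<and> closedin Z A \<and> openin Z A \<longrightarrow> P (subtopology Z A)) \<and>
     \<comment> \<open>finitely additive\<close>
     (\<forall>Z \<A>. tychonoff Z \<and> finite \<A> \<and> \<Union>\<A> = topspace Z \<and> disjoint \<A> \<and>
         (\<forall>A\<in>\<A>. closedin Z A \<and> P (subtopology Z A)) \<longrightarrow> P Z) \<and>
     \<comment> \<open>invariant and inverse invariant under perfect surjections\<close>
     (\<forall>Z T f. tychonoff Z \<and> tychonoff T \<and> perfect_map Z T f \<longrightarrow> (P Z \<longleftrightarrow> P T)) \<and>
     \<comment> \<open>Mrowka's condition (W)\<close>
     mrowka_W P"

definition Coz :: "'a topology \<Rightarrow> 'a set set" where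
  "Coz X = {{x \<in> topspace X. f x \<noteq> 0} | f. continuous_map X euclideanreal f}"

definition is_extension :: "'a topology \<Rightarrow> 'a topology \<Rightarrow> bool" where
  "is_extension X Y \<longleftrightarrow> topspace X \<subseteq> topspace Y \<and> subtopology Y (topspace X) = X \<and>
     Y closure_of (topspace X) = topspace Y"

definition compact_remainder :: "'a topology \<Rightarrow> 'a topology \<Rightarrow> bool" where
  "compact_remainder X Y \<longleftrightarrow> compactin Y (topspace Y - topspace X)"

definition is_compactification :: "'a topology \<Rightarrow> 'a topology \<Rightarrow> bool" where
  "is_compactification X K \<longleftrightarrow> is_extension X K \<and> compact_space K \<and> Hausdorff_space K"

definition is_stone_cech :: "'a topology \<Rightarrow> 'a topology \<Rightarrow> bool" where
  "is_stone_cech X B \<longleftrightarrow> is_compactification X B \<and>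
     (\<forall>f. continuous_map X euclideanreal f \<and> bounded (f ` topspace X) \<longrightarrow>
        (\<exists>g. continuous_map B euclideanreal g \<and> (\<forall>x\<in>topspace X. g x = f x)))"

text \<open>The set E_P(X) of extensions of X with P and compact remainder (membership).\<close>
definition in_E :: "('a topology \<Rightarrow> bool) \<Rightarrow> 'a topology \<Rightarrow> 'a topology \<Rightarrow> bool" where
  "in_E P X Y \<longleftrightarrow> is_extension X Y \<and> compact_remainder X Y \<and> P Y"

definition locally_P :: "('a topology \<Rightarrow> bool) \<Rightarrow> 'a topology \<Rightarrow> bool" where
  "locally_P P X \<longleftrightarrow> (\<forall>x\<in>topspace X. \<exists>U. openin X U \<and> x \<in> U \<and>
       P (subtopology X (X closure_of U)))"

definition lambda_P :: "('a topology \<Rightarrow> bool) \<Rightarrow> 'a topology \<Rightarrow> 'a topology \<Rightarrow> 'a set" where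
  "lambda_P P X B = \<Union>{B interior_of (B closure_of C) | C. C \<in> Coz X \<and>
       P (subtopology X (X closure_of C))}"

end

theory Submission
  imports Defs
begin


lemma tych_sub: "tychonoff X \<Longrightarrow> tychonoff (subtopology X S)"
  by (simp add: tychonoff_def completely_regular_space_subtopology Hausdorff_space_subtopology)

lemma tych_homeo: "tychonoff X \<Longrightarrow> homeomorphic_map X Y f \<Longrightarrow> tychonoff Y"
  unfolding tychonoff_def
  by (meson homeomorphic_Hausdorff_space homeomorphic_completely_regular_space homeomorphic_map_imp_homeomorphic_space)

lemma CL1: "compactness_like P \<Longrightarrow> \<forall>Z A. tychonoff Z \<and> P Z \<and> closedin Z A \<and> openin Z A \<longrightarrow> P (subtopology Z A)"
  unfolding compactness_like_def by (elim conjE)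
lemma CL2: "compactness_like P \<Longrightarrow> \<forall>Z \<A>. tychonoff Z \<and> finite \<A> \<and> \<Union>\<A> = topspace Z \<and> disjoint \<A> \<and>
         (\<forall>A\<in>\<A>. closedin Z A \<and> P (subtopology Z A)) \<longrightarrow> P Z"
  unfolding compactness_like_def by (elim conjE)
lemma CL3: "compactness_like P \<Longrightarrow> \<forall>Z T f. tychonoff Z \<and> tychonoff T \<and> perfect_map Z T f \<longrightarrow> (P Z \<longleftrightarrow> P T)"
  unfolding compactness_like_def by (elim conjE)
lemma CL4: "compactness_like P \<Longrightarrow> mrowka_W P"
  unfolding compactness_like_def by (elim conjE)

lemma P_perfect: "compactness_like P \<Longrightarrow> tychonoff S \<Longrightarrow> tychonoff T \<Longrightarrow> perfect_map S T f \<Longrightarrow> P S = P T"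
proof -
  assume a: "compactness_like P" "tychonoff S" "tychonoff T" "perfect_map S T f"
  show ?thesis by (rule mp[OF spec[OF spec[OF spec[OF CL3[OF a(1)]]], of S T f]]) (intro conjI a(2-4))
qed

lemma P_homeo: "compactness_like P \<Longrightarrow> tychonoff S \<Longrightarrow> homeomorphic_map S T f \<Longrightarrow> P S = P T"
proof -
  assume a: "compactness_like P" "tychonoff S" "homeomorphic_map S T f"
  show ?thesis by (rule P_perfect[OF a(1) a(2) tych_homeo[OF a(2) a(3)] homeomorphic_imp_perfect_map[OF a(3)]])
qed

lemma P_clopen: "compactness_like P \<Longrightarrow> tychonoff S \<Longrightarrow> P S \<Longrightarrow> closedin S A \<Longrightarrow> openin S A \<Longrightarrow> P (subtopology S A)"
proof -
  assume a: "compactness_like P" "tychonoff S" "P S" "closedin S A" "openin S A"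
  show ?thesis by (rule mp[OF spec[OF spec[OF CL1[OF a(1)]], of S A]]) (intro conjI a(2-5))
qed

lemma P_add: "compactness_like P \<Longrightarrow> tychonoff S \<Longrightarrow> finite \<A> \<Longrightarrow> \<Union>\<A> = topspace S \<Longrightarrow> disjoint \<A>
   \<Longrightarrow> (\<And>A. A\<in>\<A> \<Longrightarrow> closedin S A \<and> P (subtopology S A)) \<Longrightarrow> P S"
proof -
  assume a: "compactness_like P" "tychonoff S" "finite \<A>" "\<Union>\<A> = topspace S" "disjoint \<A>"
    "\<And>A. A\<in>\<A> \<Longrightarrow> closedin S A \<and> P (subtopology S A)"
  have "\<forall>A\<in>\<A>. closedin S A \<and> P (subtopology S A)" using a(6) by blast
  then show "P S" using CL2[OF a(1)] a(2-5) by blast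
qed

lemma P_empty: "compactness_like P \<Longrightarrow> tychonoff S \<Longrightarrow> P (subtopology S {})"
proof -
  assume a: "compactness_like P" "tychonoff S"
  have t: "tychonoff (subtopology S {})" using a(2) by (rule tych_sub)
  show ?thesis by (rule P_add[OF a(1) t, where \<A>="{}"]) (simp_all add: disjoint_def)
qed

lemma inj_pair: assumes "infinite (UNIV::'a set)" shows "\<exists>e::'a\<times>bool \<Rightarrow> 'a. inj e"
proof -
  have "ordIso2 (card_of ((UNIV::'a set) <+> (UNIV::'a set))) (card_of (UNIV::'a set))"
    by (rule card_of_Plus_infinite1) (use assms card_of_mono1 in auto)
  then obtain f where f: "bij_betw f ((UNIV::'a set) <+> (UNIV::'a set)) (UNIV::'a set)"
    using card_of_ordIso by blast
  define e where "e = (\<lambda>(x::'a,b::bool). f (if b then Inr x else Inl x))"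
  have "inj e"
  proof
    fix u v assume "e u = e v"
    moreover obtain x b y c where "u = (x,b)" "v = (y,c)" by fastforce
    ultimately show "u = v" using f unfolding e_def bij_betw_def inj_on_def
      by (auto split: if_splits)
  qed
  then show ?thesis by blast
qed

definition img_top :: "('b \<Rightarrow> 'a) \<Rightarrow> 'b topology \<Rightarrow> 'a topology" where
  "img_top e M = topology (\<lambda>U. \<exists>V. openin M V \<and> U = e ` V)"

lemma openin_img_top:
  assumes "inj_on e (topspace M)"
  shows "openin (img_top e M) U \<longleftrightarrow> (\<exists>V. openin M V \<and> U = e ` V)"
proof -
  have "istopology (\<lambda>U. \<exists>V. openin M V \<and> U = e ` V)"
    unfolding istopology_def
  proof (intro conjI allI impI)
    fix S T assume "\<exists>V. openin M V \<and> S = e ` V" "\<exists>V. openin M V \<and> T = e ` V"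
    then obtain V1 V2 where v: "openin M V1" "S = e ` V1" "openin M V2" "T = e ` V2" by blast
    have "e ` V1 \<inter> e ` V2 = e ` (V1 \<inter> V2)"
      by (rule inj_on_image_Int[symmetric, OF assms openin_subset[OF v(1)] openin_subset[OF v(3)]])
    then have "S \<inter> T = e ` (V1 \<inter> V2)" using v by simp
    moreover have "openin M (V1 \<inter> V2)" using v by (simp add: openin_Int)
    ultimately show "\<exists>V. openin M V \<and> S \<inter> T = e ` V" by blast
  next
    fix K assume K: "\<forall>S\<in>K. \<exists>V. openin M V \<and> S = e ` V"
    define W where "W = \<Union>{V. openin M V \<and> e ` V \<in> K}"
    have "openin M W" unfolding W_def by (rule openin_Union) blast
    moreover have "\<Union>K = e ` W"
    proof
      show "\<Union>K \<subseteq> e ` W" unfolding W_def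
      proof
        fix y assume "y \<in> \<Union>K"
        then obtain S where "S \<in> K" "y \<in> S" by blast
        then obtain V where "openin M V" "S = e ` V" using K by blast
        then obtain x where "x \<in> V" "y = e x" using \<open>y \<in> S\<close> by blast
        then have "x \<in> \<Union>{V. openin M V \<and> e ` V \<in> K}"
          using \<open>openin M V\<close> \<open>S = e ` V\<close> \<open>S \<in> K\<close> by blast
        then show "y \<in> e ` \<Union>{V. openin M V \<and> e ` V \<in> K}" using \<open>y = e x\<close> by blast
      qed
      show "e ` W \<subseteq> \<Union>K" unfolding W_def by blast
    qed
    ultimately show "\<exists>V. openin M V \<and> \<Union>K = e ` V" by (intro exI[of _ W]) simp
  qed
  then show ?thesis unfolding img_top_def by simp
qed

lemma topspace_img_top: "inj_on e (topspace M) \<Longrightarrow> topspace (img_top e M) = e ` topspace M"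
proof -
  assume a: "inj_on e (topspace M)"
  have "openin (img_top e M) (e ` topspace M)" using openin_img_top[OF a] by blast
  then have 1: "e ` topspace M \<subseteq> topspace (img_top e M)" by (rule openin_subset)
  obtain V where "openin M V" "topspace (img_top e M) = e ` V"
    using openin_img_top[OF a, of "topspace (img_top e M)"] by auto
  then have "topspace (img_top e M) \<subseteq> e ` topspace M" using openin_subset[of M V] by blast
  with 1 show ?thesis by blast
qed

lemma homeo_img_top:
  assumes a: "inj_on e (topspace M)" shows "homeomorphic_map M (img_top e M) e"
proof (rule bijective_open_imp_homeomorphic_map)
  show "continuous_map M (img_top e M) e"
    unfolding continuous_map_def
  proof (intro conjI allI impI)
    show "e \<in> topspace M \<rightarrow> topspace (img_top e M)" using topspace_img_top[OF a] by blast
    fix U assume "openin (img_top e M) U"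
    then obtain V where V: "openin M V" "U = e ` V" using openin_img_top[OF a] by blast
    have "{x \<in> topspace M. e x \<in> U} = V"
      using V openin_subset[of M V] by (auto dest: inj_onD[OF a])
    then show "openin M {x \<in> topspace M. e x \<in> U}" using V by simp
  qed
  show "open_map M (img_top e M) e" unfolding open_map_def
  proof (intro allI impI)
    fix U assume "openin M U"
    then show "openin (img_top e M) (e ` U)" unfolding openin_img_top[OF a] by blast
  qed
  show "e ` topspace M = topspace (img_top e M)" by (simp add: topspace_img_top[OF a])
qed (rule a)



lemma tych_prodM:
  assumes "tychonoff S"
  shows "tychonoff (subtopology (prod_topology S (discrete_topology (UNIV::bool set))) M)"
proof -
  have "tychonoff (prod_topology S (discrete_topology (UNIV::bool set)))"
    using assms unfolding tychonoff_def
    by (simp add: completely_regular_space_prod_topology Hausdorff_space_prod_topology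
        completely_regular_space_discrete_topology Hausdorff_space_discrete_topology)
  then show ?thesis by (rule tych_sub)
qed

lemma sum_construction:
  fixes S :: "'a topology"
  assumes inf: "infinite (UNIV::'a set)" and tS: "tychonoff S"
    and c1: "closedin S A1" and c2: "closedin S A2" and un: "A1 \<union> A2 = topspace S"
  obtains W :: "'a topology" and g W1 W2 h1 h2 where "tychonoff W" "perfect_map W S g"
    "closedin W W1" "openin W W1" "closedin W W2" "openin W W2"
    "W1 \<union> W2 = topspace W" "W1 \<inter> W2 = {}"
    "homeomorphic_map (subtopology S A1) (subtopology W W1) h1"
    "homeomorphic_map (subtopology S A2) (subtopology W W2) h2"
proof -
  obtain e :: "'a \<times> bool \<Rightarrow> 'a" where e: "inj e" using inj_pair[OF inf] by blast
  define PT where "PT = prod_topology S (discrete_topology (UNIV::bool set))"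
  define M where "M = subtopology PT (A1 \<times> {False} \<union> A2 \<times> {True})"
  define W where "W = img_top e M"
  have A1s: "A1 \<subseteq> topspace S" and A2s: "A2 \<subseteq> topspace S" using c1 c2 closedin_subset by auto
  have tM: "topspace M = A1 \<times> {False} \<union> A2 \<times> {True}"
    unfolding M_def PT_def using A1s A2s by auto
  have ie: "inj_on e (topspace M)" using inj_on_subset[OF e subset_UNIV] .
  have hW: "homeomorphic_map M W e" unfolding W_def by (rule homeo_img_top[OF ie])
  have tyM: "tychonoff M" unfolding M_def PT_def by (rule tych_prodM[OF tS])
  have tyW: "tychonoff W" by (rule tych_homeo[OF tyM hW])
  have tW: "topspace W = e ` topspace M" unfolding W_def by (rule topspace_img_top[OF ie])
  have contf: "continuous_map M S fst"
    unfolding M_def PT_def by (rule continuous_map_from_subtopology[OF continuous_map_fst])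
  have emb: "continuous_map (subtopology S A) M (\<lambda>x. (x, b))"
    if "A = A1 \<and> b = False \<or> A = A2 \<and> b = True" for A b
  proof -
    have "continuous_map (subtopology S A) PT (\<lambda>x. (x, b))"
      unfolding PT_def
      by (rule continuous_map_pairedI) (auto simp: continuous_map_from_subtopology)
    then show ?thesis unfolding M_def
      by (rule continuous_map_into_subtopology) (use that in auto)
  qed
  have cmap: "closed_map M S fst"
    unfolding closed_map_def
  proof (intro allI impI)
    fix C assume C: "closedin M C"
    have Cs: "C \<subseteq> topspace M" using C closedin_subset by blast
    define C1 where "C1 = {x \<in> topspace (subtopology S A1). (x, False) \<in> C}"
    define C2 where "C2 = {x \<in> topspace (subtopology S A2). (x, True) \<in> C}"
    have "closedin (subtopology S A1) C1" unfolding C1_def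
      by (rule closedin_continuous_map_preimage[OF emb C]) simp
    then have 1: "closedin S C1" using c1 closedin_trans_full by blast
    have "closedin (subtopology S A2) C2" unfolding C2_def
      by (rule closedin_continuous_map_preimage[OF emb C]) simp
    then have 2: "closedin S C2" using c2 closedin_trans_full by blast
    have "fst ` C = C1 \<union> C2"
    proof
      show "fst ` C \<subseteq> C1 \<union> C2"
      proof
        fix x assume "x \<in> fst ` C"
        then obtain b where xb: "(x, b) \<in> C" by force
        then have "(x,b) \<in> topspace M" using Cs by blast
        then show "x \<in> C1 \<union> C2" using xb A1s A2s unfolding C1_def C2_def tM by auto
      qed
      show "C1 \<union> C2 \<subseteq> fst ` C" unfolding C1_def C2_def by force
    qed
    then show "closedin S (fst ` C)" using 1 2 by (simp add: closedin_Un)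
  qed
  have pf: "perfect_map M S fst"
    unfolding perfect_map_def proper_map_def
  proof (intro conjI ballI)
    show "continuous_map M S fst" by (rule contf)
    show "closed_map M S fst" by (rule cmap)
    fix y assume "y \<in> topspace S"
    have "{x \<in> topspace M. fst x = y} \<subseteq> {(y, False), (y, True)}" by auto
    then have "finite {x \<in> topspace M. fst x = y}" by (rule finite_subset) simp
    then show "compactin M {x \<in> topspace M. fst x = y}" by (intro finite_imp_compactin) auto
  next
    show "fst ` topspace M = topspace S" unfolding tM image_Un using un by auto
  qed
  obtain g where "homeomorphic_maps M W e g" using hW homeomorphic_map_maps by blast
  then have hg: "homeomorphic_map W M g" using homeomorphic_maps_map by blast
  have pW: "perfect_map W S (fst \<circ> g)"
    by (rule perfect_map_compose[OF homeomorphic_imp_perfect_map[OF hg] pf])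
  define W1 where "W1 = e ` (A1 \<times> {False})"
  define W2 where "W2 = e ` (A2 \<times> {True})"
  have clop: "closedin M (A \<times> {b}) \<and> openin M (A \<times> {b})"
    if "A = A1 \<and> b = False \<or> A = A2 \<and> b = True" for A b
  proof
    have cA: "closedin S A" using that c1 c2 by blast
    have "closedin PT (A \<times> {b})" unfolding PT_def closedin_prod_Times_iff using cA by simp
    moreover have "A \<times> {b} = topspace M \<inter> (A \<times> {b})" using that unfolding tM by blast
    ultimately show "closedin M (A \<times> {b})" unfolding M_def
      by (metis closedin_subtopology_Int_closed inf_commute M_def tM topspace_subtopology)
    have "openin PT (topspace S \<times> {b})" unfolding PT_def openin_prod_Times_iff by simp
    moreover have "A \<times> {b} = topspace M \<inter> (topspace S \<times> {b})" using that A1s A2s unfolding tM by blast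
    ultimately show "openin M (A \<times> {b})" unfolding M_def
      by (metis M_def openin_subtopology_Int2 tM topspace_subtopology)
  qed
  have sub: "A \<times> {b} \<subseteq> topspace M" if "A = A1 \<and> b = False \<or> A = A2 \<and> b = True" for A b
    using that unfolding tM by blast
  have cW: "closedin W (e ` (A \<times> {b})) \<and> openin W (e ` (A \<times> {b}))"
    if "A = A1 \<and> b = False \<or> A = A2 \<and> b = True" for A b
    using clop[OF that] sub[OF that] homeomorphic_map_closedness[OF hW] homeomorphic_map_openness[OF hW]
    by blast
  have hp: "homeomorphic_map (subtopology S A) (subtopology W (e ` (A \<times> {b}))) (e \<circ> (\<lambda>x. (x, b)))"
    if "A = A1 \<and> b = False \<or> A = A2 \<and> b = True" for A b
  proof (rule homeomorphic_map_compose)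
    have "homeomorphic_maps (subtopology S A) (subtopology M (A \<times> {b})) (\<lambda>x. (x, b)) fst"
      unfolding homeomorphic_maps_def
    proof (intro conjI ballI)
      show "continuous_map (subtopology S A) (subtopology M (A \<times> {b})) (\<lambda>x. (x, b))"
        by (rule continuous_map_into_subtopology[OF emb[OF that]]) auto
      show "continuous_map (subtopology M (A \<times> {b})) (subtopology S A) fst"
        by (rule continuous_map_into_subtopology[OF continuous_map_from_subtopology[OF contf]]) auto
    qed auto
    then show "homeomorphic_map (subtopology S A) (subtopology M (A \<times> {b})) (\<lambda>x. (x, b))"
      using homeomorphic_maps_map by blast
    show "homeomorphic_map (subtopology M (A \<times> {b})) (subtopology W (e ` (A \<times> {b}))) e"
      by (rule homeomorphic_map_subtopologies[OF hW]) (use sub[OF that] tW in auto)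
  qed
  have un2: "W1 \<union> W2 = topspace W" unfolding W1_def W2_def tW tM by blast
  have dj: "W1 \<inter> W2 = {}" unfolding W1_def W2_def using e by (auto simp: inj_def)
  have x1: "closedin W W1 \<and> openin W W1" unfolding W1_def by (rule cW) simp
  have x2: "closedin W W2 \<and> openin W W2" unfolding W2_def by (rule cW) simp
  have y1: "homeomorphic_map (subtopology S A1) (subtopology W W1) (e \<circ> (\<lambda>x. (x, False)))"
    unfolding W1_def by (rule hp) simp
  have y2: "homeomorphic_map (subtopology S A2) (subtopology W W2) (e \<circ> (\<lambda>x. (x, True)))"
    unfolding W2_def by (rule hp) simp
  show ?thesis
    by (rule that[OF tyW pW _ _ _ _ un2 dj y1 y2]) (use x1 x2 in auto)
qed

lemma finite_clopen:
  assumes "finite (UNIV::'a set)" "tychonoff (S::'a topology)" "U \<subseteq> topspace S"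
  shows "closedin S U \<and> openin S U"
proof -
  have "S = discrete_topology (topspace S)"
    by (rule finite_topspace_imp_discrete_topology[OF refl])
       (use assms in \<open>auto simp: tychonoff_def intro: finite_subset\<close>)
  then show ?thesis using assms(3) by (metis closedin_discrete_topology openin_discrete_topology)
qed

lemma PH:
  assumes P: "compactness_like P" and tS: "tychonoff S" and "P S" and cA: "closedin S A"
  shows "P (subtopology S A)"
proof (cases "finite (UNIV::'a set)")
  case True
  then show ?thesis using finite_clopen[OF True tS closedin_subset[OF cA]] P_clopen[OF P tS \<open>P S\<close>] by blast
next
  case False
  obtain W :: "'a topology" and g W1 W2 h1 h2 where W: "tychonoff W" "perfect_map W S g"
    "closedin W W1" "openin W W1" "closedin W W2" "openin W W2"
    "W1 \<union> W2 = topspace W" "W1 \<inter> W2 = {}"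
    "homeomorphic_map (subtopology S A) (subtopology W W1) h1"
    "homeomorphic_map (subtopology S (topspace S)) (subtopology W W2) h2"
    by (rule sum_construction[OF False tS cA closedin_topspace]) (use closedin_subset[OF cA] in auto)
  have "P W" using P_perfect[OF P W(1) tS W(2)] \<open>P S\<close> by simp
  then have "P (subtopology W W1)" using P_clopen[OF P W(1)] W(3,4) by blast
  then show ?thesis using P_homeo[OF P tych_sub[OF tS] W(9)] by simp
qed

lemma PU:
  assumes P: "compactness_like P" and tS: "tychonoff S" and c1: "closedin S A1" and c2: "closedin S A2"
    and un: "A1 \<union> A2 = topspace S" and p1: "P (subtopology S A1)" and p2: "P (subtopology S A2)"
  shows "P S"
proof (cases "finite (UNIV::'a set)")
  case True
  have s2: "A2 - A1 \<subseteq> topspace (subtopology S A2)" using closedin_subset[OF c2] by auto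
  have "P (subtopology (subtopology S A2) (A2 - A1))"
    using P_clopen[OF P tych_sub[OF tS] p2] finite_clopen[OF True tych_sub[OF tS] s2] by blast
  then have p3: "P (subtopology S (A2 - A1))" by (simp add: subtopology_subtopology Int_absorb1)
  show ?thesis
  proof (rule P_add[OF P tS, of "{A1, A2 - A1}"])
    show "\<Union>{A1, A2 - A1} = topspace S" using un by auto
    show "disjoint {A1, A2 - A1}" by (auto simp: pairwise_def disjnt_def)
    fix A assume "A \<in> {A1, A2 - A1}"
    moreover have "closedin S (A2 - A1)" using finite_clopen[OF True tS] closedin_subset[OF c2] by blast
    ultimately show "closedin S A \<and> P (subtopology S A)" using c1 p1 p3 by blast
  qed simp
next
  case False
  obtain W :: "'a topology" and g W1 W2 h1 h2 where W: "tychonoff W" "perfect_map W S g"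
    "closedin W W1" "openin W W1" "closedin W W2" "openin W W2"
    "W1 \<union> W2 = topspace W" "W1 \<inter> W2 = {}"
    "homeomorphic_map (subtopology S A1) (subtopology W W1) h1"
    "homeomorphic_map (subtopology S A2) (subtopology W W2) h2"
    by (rule sum_construction[OF False tS c1 c2 un])
  have q1: "P (subtopology W W1)" using P_homeo[OF P tych_sub[OF tS] W(9)] p1 by simp
  have q2: "P (subtopology W W2)" using P_homeo[OF P tych_sub[OF tS] W(10)] p2 by simp
  have "P W"
  proof (rule P_add[OF P W(1), of "{W1, W2}"])
    show "\<Union>{W1, W2} = topspace W" using W(7) by auto
    show "disjoint {W1, W2}" using W(8) by (auto simp: pairwise_def disjnt_def)
    fix A assume "A \<in> {W1, W2}"
    then show "closedin W A \<and> P (subtopology W A)" using W(3,5) q1 q2 by blast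
  qed simp
  then show ?thesis using P_perfect[OF P W(1) tS W(2)] by simp
qed

lemma PU':
  assumes P: "compactness_like P" and tT: "tychonoff T" and c1: "closedin T A1" and c2: "closedin T A2"
    and p1: "P (subtopology T A1)" and p2: "P (subtopology T A2)"
  shows "P (subtopology T (A1 \<union> A2))"
proof (rule PU[OF P tych_sub[OF tT]])
  have s: "A1 \<subseteq> topspace T" "A2 \<subseteq> topspace T" using c1 c2 closedin_subset by auto
  show "closedin (subtopology T (A1 \<union> A2)) A1"
    using closedin_subset_topspace[OF c1, of "A1 \<union> A2"] by simp
  show "closedin (subtopology T (A1 \<union> A2)) A2"
    using closedin_subset_topspace[OF c2, of "A1 \<union> A2"] by simp
  show "A1 \<union> A2 = topspace (subtopology T (A1 \<union> A2))" using s by auto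
  show "P (subtopology (subtopology T (A1 \<union> A2)) A1)" using p1
    by (simp add: subtopology_subtopology Int_absorb1)
  show "P (subtopology (subtopology T (A1 \<union> A2)) A2)" using p2
    by (simp add: subtopology_subtopology Int_absorb1)
qed



lemma comp_normal: "is_compactification Y Z \<Longrightarrow> normal_space Z"
  unfolding is_compactification_def by (simp add: compact_Hausdorff_or_regular_imp_normal_space)

lemma comp_tych: "is_compactification Y Z \<Longrightarrow> tychonoff Y"
proof -
  assume c: "is_compactification Y Z"
  have "tychonoff Z" using c comp_normal[OF c] unfolding is_compactification_def tychonoff_def
    by (simp add: normal_imp_completely_regular_space)
  then have "tychonoff (subtopology Z (topspace Y))" by (rule tych_sub)
  then show ?thesis using c unfolding is_compactification_def is_extension_def by simp
qed

lemma K_closed: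
  assumes "compact_remainder X Y" "is_compactification Y Z"
  shows "closedin Z (topspace Y - topspace X)"
proof -
  have "compactin Y (topspace Y - topspace X)" using assms(1) unfolding compact_remainder_def .
  then have "compactin (subtopology Z (topspace Y)) (topspace Y - topspace X)"
    using assms(2) unfolding is_compactification_def is_extension_def by simp
  then have "compactin Z (topspace Y - topspace X)" by (simp add: compactin_subtopology)
  then show ?thesis using assms(2) compactin_imp_closedin unfolding is_compactification_def by blast
qed

lemma fwd_C:
  assumes P: "compactness_like P"
    and eY: "is_extension X Y" and cZ: "is_compactification Y Z" and sB: "is_stone_cech X B"
    and phi: "continuous_map B Z \<phi>" and phid: "\<forall>x\<in>topspace X. \<phi> x = x"
    and PY: "P Y"
    and f: "continuous_map Z euclideanreal f" and fK: "f ` (topspace Y - topspace X) \<subseteq> {0}"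
  defines "C \<equiv> {x \<in> topspace X. f x > 1/2}"
  shows "C \<in> Coz X" "openin X C" "P (subtopology X (X closure_of C))"
    "{c \<in> topspace B. f (\<phi> c) > 1/2} \<subseteq> B interior_of (B closure_of C)"
proof -
  have XY: "topspace X \<subseteq> topspace Y" "subtopology Y (topspace X) = X" using eY unfolding is_extension_def by auto
  have YZ: "topspace Y \<subseteq> topspace Z" "subtopology Z (topspace Y) = Y"
    using cZ unfolding is_compactification_def is_extension_def by auto
  have fY: "continuous_map Y euclideanreal f"
    using continuous_map_from_subtopology[OF f, of "topspace Y"] YZ by simp
  have fX: "continuous_map X euclideanreal f"
    using continuous_map_from_subtopology[OF fY, of "topspace X"] XY by simp
  have gX: "continuous_map X euclideanreal (\<lambda>x. max (f x - 1/2) 0)"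
    by (intro continuous_map_real_max continuous_map_diff fX) simp_all
  have Ceq: "C = {x \<in> topspace X. max (f x - 1/2) 0 \<noteq> 0}" unfolding C_def by auto
  show "C \<in> Coz X" unfolding Coz_def
    by (rule CollectI, rule exI[of _ "\<lambda>x. max (f x - 1/2) 0"]) (use Ceq gX in simp)
  have "C = {x \<in> topspace X. f x \<in> {1/2<..}}" unfolding C_def by auto
  then show "openin X C" using openin_continuous_map_preimage[OF fX, of "{1/2<..}"] by simp
  define D where "D = {y \<in> topspace Y. f y \<in> {1/2..}}"
  have cD: "closedin Y D" unfolding D_def
    by (rule closedin_continuous_map_preimage[OF fY]) simp
  have DX: "D \<subseteq> topspace X" unfolding D_def using fK by force
  have CD: "C \<subseteq> D" unfolding C_def D_def using XY by auto
  have clY: "Y closure_of C \<subseteq> D" by (rule closure_of_minimal[OF CD cD])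
  have "X closure_of C = topspace X \<inter> Y closure_of (topspace X \<inter> C)"
    using closure_of_subtopology[of Y "topspace X" C] XY by simp
  also have "\<dots> = topspace X \<inter> Y closure_of C"
  proof -
    have "topspace X \<inter> C = C" unfolding C_def by auto
    then show ?thesis by simp
  qed
  also have "\<dots> = Y closure_of C" using clY DX by blast
  finally have eq: "X closure_of C = Y closure_of C" .
  have "subtopology X (X closure_of C) = subtopology Y (Y closure_of C)"
  proof -
    have "subtopology X (X closure_of C) = subtopology Y (topspace X \<inter> Y closure_of C)"
      by (metis XY(2) eq subtopology_subtopology)
    also have "topspace X \<inter> Y closure_of C = Y closure_of C" using clY DX by blast
    finally show ?thesis .
  qed
  moreover have "P (subtopology Y (Y closure_of C))"
    by (rule PH[OF P comp_tych[OF cZ] PY closedin_closure_of])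
  ultimately show "P (subtopology X (X closure_of C))" by simp
  define Ob where "Ob = {c \<in> topspace B. f (\<phi> c) \<in> {1/2<..}}"
  have oO: "openin B Ob" unfolding Ob_def
    by (rule openin_continuous_map_preimage[OF continuous_map_compose[OF phi f, unfolded o_def]]) simp
  have dense: "B closure_of topspace X = topspace B"
    using sB unfolding is_stone_cech_def is_compactification_def is_extension_def by simp
  have "Ob \<subseteq> B closure_of C"
  proof
    fix c assume cO: "c \<in> Ob"
    then have cB: "c \<in> topspace B" unfolding Ob_def by simp
    show "c \<in> B closure_of C"
      unfolding in_closure_of
    proof (intro conjI allI impI cB)
      fix T assume T: "c \<in> T \<and> openin B T"
      have "c \<in> B closure_of topspace X" using dense cB by simp
      then have "\<forall>T. c \<in> T \<and> openin B T \<longrightarrow> (\<exists>y. y \<in> topspace X \<and> y \<in> T)"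
        unfolding in_closure_of by blast
      moreover have "c \<in> T \<inter> Ob \<and> openin B (T \<inter> Ob)" using T cO oO by (simp add: openin_Int)
      ultimately obtain y where y: "y \<in> topspace X" "y \<in> T \<inter> Ob" by blast
      then have "y \<in> C" unfolding C_def Ob_def using phid by auto
      then show "\<exists>y. y \<in> C \<and> y \<in> T" using y by blast
    qed
  qed
  then have "Ob \<subseteq> B interior_of (B closure_of C)" by (rule interior_of_maximal[OF _ oO])
  then show "{c \<in> topspace B. f (\<phi> c) > 1/2} \<subseteq> B interior_of (B closure_of C)"
    unfolding Ob_def by simp
qed

lemma fwd:
  assumes P: "compactness_like P"
    and eY: "is_extension X Y" and cr: "compact_remainder X Y" and cZ: "is_compactification Y Z"
    and sB: "is_stone_cech X B"
    and phi: "continuous_map B Z \<phi>" and phid: "\<forall>x\<in>topspace X. \<phi> x = x"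
    and PY: "P Y"
  shows "locally_P P X \<and>
           topspace B - lambda_P P X B \<subseteq> {b \<in> topspace B. \<phi> b \<in> topspace Y - topspace X}"
proof -
  define K where "K = topspace Y - topspace X"
  have Kc: "closedin Z K" unfolding K_def by (rule K_closed[OF cr cZ])
  have nZ: "normal_space Z" by (rule comp_normal[OF cZ])
  have HZ: "Hausdorff_space Z" using cZ unfolding is_compactification_def by simp
  have XY: "topspace X \<subseteq> topspace Y" using eY unfolding is_extension_def by auto
  have YZ: "topspace Y \<subseteq> topspace Z"
    using cZ unfolding is_compactification_def is_extension_def by auto
  have key: "\<exists>C. C \<in> Coz X \<and> openin X C \<and> P (subtopology X (X closure_of C)) \<and>
       {c \<in> topspace B. f (\<phi> c) > 1/2} \<subseteq> B interior_of (B closure_of C) \<and>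
       {x \<in> topspace X. f x > 1/2} = C"
    if f: "continuous_map Z euclideanreal f" and fK: "f ` K \<subseteq> {0}" for f
    using fwd_C[OF P eY cZ sB phi phid PY f fK[unfolded K_def]] by blast
  have ury: "\<exists>f. continuous_map Z euclideanreal f \<and> f ` K \<subseteq> {0} \<and> f z = 1"
    if "z \<in> topspace Z" "z \<notin> K" for z
  proof -
    have "closedin Z {z}" by (rule closedin_Hausdorff_singleton[OF HZ that(1)])
    moreover have "disjnt {z} K" using that by simp
    ultimately obtain f :: "'a \<Rightarrow> real" where "continuous_map Z euclideanreal f" "f ` {z} \<subseteq> {1}" "f ` K \<subseteq> {0}"
      using Urysohn_lemma_alt[OF nZ _ Kc] by metis
    then show ?thesis by auto
  qed
  have lP: "locally_P P X"
    unfolding locally_P_def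
  proof
    fix x assume x: "x \<in> topspace X"
    then obtain f where f: "continuous_map Z euclideanreal f" "f ` K \<subseteq> {0}" "f x = 1"
      using ury[of x] XY YZ unfolding K_def by blast
    then obtain C where C: "openin X C" "P (subtopology X (X closure_of C))" "{x \<in> topspace X. f x > 1/2} = C"
      using key by blast
    have "x \<in> C" using C(3) x f(3) by auto
    then show "\<exists>U. openin X U \<and> x \<in> U \<and> P (subtopology X (X closure_of U))" using C by blast
  qed
  have "b \<in> {b \<in> topspace B. \<phi> b \<in> topspace Y - topspace X}" if b: "b \<in> topspace B - lambda_P P X B" for b
  proof (rule ccontr)
    assume "b \<notin> {b \<in> topspace B. \<phi> b \<in> topspace Y - topspace X}"
    then have nK: "\<phi> b \<notin> K" using b unfolding K_def by blast
    have "\<phi> b \<in> topspace Z" using b phi continuous_map_image_subset_topspace by fastforce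
    then obtain f where f: "continuous_map Z euclideanreal f" "f ` K \<subseteq> {0}" "f (\<phi> b) = 1"
      using ury nK by blast
    then obtain C where C: "C \<in> Coz X" "P (subtopology X (X closure_of C))"
      "{c \<in> topspace B. f (\<phi> c) > 1/2} \<subseteq> B interior_of (B closure_of C)"
      using key by blast
    have "b \<in> B interior_of (B closure_of C)" using C(3) b f(3) by auto
    then have "b \<in> lambda_P P X B" unfolding lambda_P_def using C(1,2) by blast
    then show False using b by blast
  qed
  then show ?thesis using lP by blast
qed



lemma finite_union_P:
  assumes P: "compactness_like P" and tT: "tychonoff T" and fin: "finite \<C>"
    and h: "\<And>A. A \<in> \<C> \<Longrightarrow> closedin T A \<and> P (subtopology T A)"
  shows "P (subtopology T (\<Union>\<C>))"
  using fin h
proof (induction \<C> rule: finite_induct)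
  case empty
  then show ?case using P_empty[OF P tT] by simp
next
  case (insert A \<C>)
  have c1: "closedin T A" "P (subtopology T A)" using insert.prems by auto
  have c2: "closedin T (\<Union>\<C>)" using insert by (intro closedin_Union) auto
  have p2: "P (subtopology T (\<Union>\<C>))" using insert by auto
  show ?case using PU'[OF P tT c1(1) c2 c1(2) p2] by simp
qed

lemma G:
  assumes P: "compactness_like P" and tX: "tychonoff X"
    and eY: "is_extension X Y" and cr: "compact_remainder X Y" and cZ: "is_compactification Y Z"
    and sB: "is_stone_cech X B"
    and phi: "continuous_map B Z \<phi>" and phid: "\<forall>x\<in>topspace X. \<phi> x = x"
    and H: "topspace B - lambda_P P X B \<subseteq> {b \<in> topspace B. \<phi> b \<in> topspace Y - topspace X}"
    and V: "openin Z V" and KV: "topspace Y - topspace X \<subseteq> V"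
  shows "P (subtopology Y (topspace Y - V))"
proof -
  have XY: "topspace X \<subseteq> topspace Y" "subtopology Y (topspace X) = X" using eY unfolding is_extension_def by auto
  have XB: "topspace X \<subseteq> topspace B" "subtopology B (topspace X) = X" "compact_space B"
    using sB unfolding is_stone_cech_def is_compactification_def is_extension_def by auto
  define Ob where "Ob = {b \<in> topspace B. \<phi> b \<in> V}"
  have oOb: "openin B Ob" unfolding Ob_def by (rule openin_continuous_map_preimage[OF phi V])
  have cpt: "compactin B (topspace B - Ob)"
    by (rule closedin_compact_space[OF XB(3)]) (use oOb in blast)
  define \<C>0 where "\<C>0 = {C. C \<in> Coz X \<and> P (subtopology X (X closure_of C))}"
  define g where "g = (\<lambda>C. B interior_of (B closure_of C))"
  have lam: "lambda_P P X B = \<Union>(g ` \<C>0)" unfolding lambda_P_def g_def \<C>0_def by blast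
  have cov: "topspace B - Ob \<subseteq> \<Union>(g ` \<C>0)"
  proof
    fix b assume b: "b \<in> topspace B - Ob"
    have "b \<notin> {b \<in> topspace B. \<phi> b \<in> topspace Y - topspace X}" using b KV unfolding Ob_def by blast
    then show "b \<in> \<Union>(g ` \<C>0)" using H b lam by blast
  qed
  have opn: "\<forall>U\<in>g ` \<C>0. openin B U" unfolding g_def by (simp add: openin_interior_of)
  obtain \<F> where F: "finite \<F>" "\<F> \<subseteq> g ` \<C>0" "topspace B - Ob \<subseteq> \<Union>\<F>"
  proof -
    have "\<forall>\<U>. (\<forall>U\<in>\<U>. openin B U) \<and> topspace B - Ob \<subseteq> \<Union>\<U> \<longrightarrow>
             (\<exists>\<F>. finite \<F> \<and> \<F> \<subseteq> \<U> \<and> topspace B - Ob \<subseteq> \<Union>\<F>)"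
      using cpt unfolding compactin_def by (elim conjE)
    then have "\<exists>\<F>. finite \<F> \<and> \<F> \<subseteq> g ` \<C>0 \<and> topspace B - Ob \<subseteq> \<Union>\<F>"
      using opn cov by blast
    then show ?thesis using that by blast
  qed
  obtain \<C> where Cc: "\<C> \<subseteq> \<C>0" "finite \<C>" "\<F> = g ` \<C>"
    using finite_subset_image[OF F(1) F(2)] by blast
  define F0 where "F0 = topspace Y - V"
  have F0X: "F0 \<subseteq> topspace X" unfolding F0_def using KV by blast
  have cF0: "closedin Y F0"
  proof -
    have YZ: "subtopology Z (topspace Y) = Y"
      using cZ unfolding is_compactification_def is_extension_def by auto
    have "openin (subtopology Z (topspace Y)) (V \<inter> topspace Y)"
      unfolding openin_subtopology using V by blast
    then have o: "openin Y (V \<inter> topspace Y)" using YZ by simp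
    have "F0 = topspace Y - (V \<inter> topspace Y)" unfolding F0_def by blast
    then show ?thesis using closedin_diff[OF closedin_topspace o] by simp
  qed
  have cF0X: "closedin X F0"
    using closedin_subtopology_Int_closed[OF cF0, of "topspace X"] XY(2) F0X by (simp add: Int_absorb1)
  have Csub: "C \<subseteq> topspace X" if "C \<in> Coz X" for C using that unfolding Coz_def by auto
  have clX: "X closure_of C = topspace X \<inter> B closure_of C" if "C \<subseteq> topspace X" for C
    using closure_of_subtopology[of B "topspace X" C] XB(2) that by (simp add: Int_absorb1)
  have F0cov: "F0 = \<Union>((\<lambda>C. F0 \<inter> X closure_of C) ` \<C>)"
  proof
    show "F0 \<subseteq> \<Union>((\<lambda>C. F0 \<inter> X closure_of C) ` \<C>)"
    proof
      fix x assume x: "x \<in> F0"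
      then have xX: "x \<in> topspace X" using F0X by blast
      have "x \<notin> Ob" using x xX phid unfolding F0_def Ob_def by auto
      then have "x \<in> topspace B - Ob" using xX XB(1) by blast
      then obtain C where C: "C \<in> \<C>" "x \<in> g C" using F(3) Cc(3) by blast
      have "x \<in> B closure_of C" using C(2) interior_of_subset[of B "B closure_of C"] unfolding g_def by blast
      moreover have "C \<subseteq> topspace X" using C(1) Cc(1) Csub unfolding \<C>0_def by blast
      ultimately have "x \<in> X closure_of C" using clX xX by blast
      then show "x \<in> \<Union>((\<lambda>C. F0 \<inter> X closure_of C) ` \<C>)" using C(1) x by blast
    qed
  qed blast
  have pieces: "closedin X A \<and> P (subtopology X A)" if Ain: "A \<in> (\<lambda>C. F0 \<inter> X closure_of C) ` \<C>" for A
  proof -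
    obtain C where C: "C \<in> \<C>" "A = F0 \<inter> X closure_of C" using Ain by blast
    have pC: "P (subtopology X (X closure_of C))" using C(1) Cc(1) unfolding \<C>0_def by blast
    have "closedin (subtopology X (X closure_of C)) (X closure_of C \<inter> F0)"
      by (rule closedin_subtopology_Int_closed[OF cF0X])
    then have "P (subtopology (subtopology X (X closure_of C)) (X closure_of C \<inter> F0))"
      by (rule PH[OF P tych_sub[OF tX] pC])
    moreover have "X closure_of C \<inter> (X closure_of C \<inter> F0) = A" unfolding C(2) by blast
    ultimately have "P (subtopology X A)" by (simp add: subtopology_subtopology)
    moreover have "closedin X A" unfolding C(2) using cF0X by (simp add: closedin_Int)
    ultimately show ?thesis by blast
  qed
  have "P (subtopology X (\<Union>((\<lambda>C. F0 \<inter> X closure_of C) ` \<C>)))"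
    by (rule finite_union_P[OF P tX]) (use Cc(2) pieces in auto)
  then have "P (subtopology X F0)" using F0cov by simp
  moreover have "subtopology X F0 = subtopology Y F0"
    using XY(2) F0X by (metis subtopology_subtopology Int_absorb1)
  ultimately show ?thesis unfolding F0_def by simp
qed



lemma Zsep:
  assumes cZ: "is_compactification Y Z" and D: "closedin Y D" and E: "compactin Y E" and DE: "D \<inter> E = {}"
  shows "\<exists>f. continuous_map Y (top_of_set {0..1::real}) f \<and> f ` E \<subseteq> {0} \<and> f ` D \<subseteq> {1}"
proof -
  have YZ: "subtopology Z (topspace Y) = Y" "topspace Y \<subseteq> topspace Z"
    using cZ unfolding is_compactification_def is_extension_def by auto
  have HZ: "Hausdorff_space Z" using cZ unfolding is_compactification_def by simp
  have "compactin (subtopology Z (topspace Y)) E" using E YZ by simp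
  then have Ec: "compactin Z E" "E \<subseteq> topspace Y" by (auto simp: compactin_subtopology)
  then have cE: "closedin Z E" using HZ compactin_imp_closedin by blast
  have Ds: "D \<subseteq> topspace Y" using D closedin_subset by blast
  have "Y closure_of D = D" using D by (simp add: closure_of_closedin)
  moreover have "Y closure_of D = topspace Y \<inter> Z closure_of D"
    using closure_of_subtopology[of Z "topspace Y" D] YZ Ds by (simp add: Int_absorb1)
  ultimately have dj: "E \<inter> Z closure_of D = {}" using DE Ec(2) by blast
  obtain f where f: "continuous_map Z (top_of_set {0..1::real}) f" "f ` E \<subseteq> {0}" "f ` (Z closure_of D) \<subseteq> {1}"
    using Urysohn_lemma[OF comp_normal[OF cZ] cE closedin_closure_of, where a=0 and b=1 and S1=D] dj by (auto simp: disjnt_def)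
  have "continuous_map Y (top_of_set {0..1::real}) f"
    using continuous_map_from_subtopology[OF f(1), of "topspace Y"] YZ by simp
  moreover have "f ` D \<subseteq> {1}" using f(3) closure_of_subset[OF order_trans[OF Ds YZ(2)]] by blast
  ultimately show ?thesis using f(2) by blast
qed

definition qmap :: "'a set \<Rightarrow> 'a \<Rightarrow> 'a \<Rightarrow> 'a" where
  "qmap K p y = (if y \<in> K then p else y)"

definition qtop :: "'a topology \<Rightarrow> 'a set \<Rightarrow> 'a \<Rightarrow> 'a topology" where
  "qtop Y K p = topology (\<lambda>U. U \<subseteq> (topspace Y - K) \<union> {p} \<and> openin Y {y \<in> topspace Y. qmap K p y \<in> U})"

lemma openin_qtop:
  "openin (qtop Y K p) U \<longleftrightarrow> U \<subseteq> (topspace Y - K) \<union> {p} \<and> openin Y {y \<in> topspace Y. qmap K p y \<in> U}"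
proof -
  have "istopology (\<lambda>U. U \<subseteq> (topspace Y - K) \<union> {p} \<and> openin Y {y \<in> topspace Y. qmap K p y \<in> U})"
    unfolding istopology_def
  proof (intro conjI allI impI)
    fix S T
    assume S: "S \<subseteq> topspace Y - K \<union> {p} \<and> openin Y {y \<in> topspace Y. qmap K p y \<in> S}"
      and T: "T \<subseteq> topspace Y - K \<union> {p} \<and> openin Y {y \<in> topspace Y. qmap K p y \<in> T}"
    have "{y \<in> topspace Y. qmap K p y \<in> S \<inter> T} =
          {y \<in> topspace Y. qmap K p y \<in> S} \<inter> {y \<in> topspace Y. qmap K p y \<in> T}" by blast
    then show "openin Y {y \<in> topspace Y. qmap K p y \<in> S \<inter> T}"
      using S T openin_Int by fastforce
    show "S \<inter> T \<subseteq> topspace Y - K \<union> {p}" using S by blast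
  next
    fix \<K> assume K: "\<forall>S\<in>\<K>. S \<subseteq> topspace Y - K \<union> {p} \<and> openin Y {y \<in> topspace Y. qmap K p y \<in> S}"
    have "{y \<in> topspace Y. qmap K p y \<in> \<Union>\<K>} = \<Union>((\<lambda>S. {y \<in> topspace Y. qmap K p y \<in> S}) ` \<K>)" by blast
    moreover have "openin Y (\<Union>((\<lambda>S. {y \<in> topspace Y. qmap K p y \<in> S}) ` \<K>))"
      using K by (intro openin_Union) blast
    ultimately show "openin Y {y \<in> topspace Y. qmap K p y \<in> \<Union>\<K>}" by simp
    show "\<Union>\<K> \<subseteq> topspace Y - K \<union> {p}" using K by blast
  qed
  then show ?thesis unfolding qtop_def by simp
qed

context
  fixes Y :: "'a topology" and K :: "'a set" and p :: 'a
  assumes cK: "closedin Y K" and kK: "compactin Y K" and pK: "p \<in> K"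
begin

lemma KY: "K \<subseteq> topspace Y" using cK closedin_subset by blast

lemma qmap_in: "y \<in> topspace Y \<Longrightarrow> qmap K p y \<in> (topspace Y - K) \<union> {p}"
  unfolding qmap_def by auto

lemma topspace_qtop: "topspace (qtop Y K p) = (topspace Y - K) \<union> {p}"
proof -
  have "{y \<in> topspace Y. qmap K p y \<in> (topspace Y - K) \<union> {p}} = topspace Y" using qmap_in by blast
  then have "openin (qtop Y K p) ((topspace Y - K) \<union> {p})" unfolding openin_qtop by simp
  then have "(topspace Y - K) \<union> {p} \<subseteq> topspace (qtop Y K p)" by (rule openin_subset)
  moreover have "topspace (qtop Y K p) \<subseteq> (topspace Y - K) \<union> {p}"
    using openin_topspace[of "qtop Y K p"] unfolding openin_qtop by blast
  ultimately show ?thesis by blast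
qed

lemma closedin_qtop:
  "closedin (qtop Y K p) C \<longleftrightarrow> C \<subseteq> (topspace Y - K) \<union> {p} \<and> closedin Y {y \<in> topspace Y. qmap K p y \<in> C}"
proof -
  have eq: "{y \<in> topspace Y. qmap K p y \<in> (topspace Y - K \<union> {p}) - C} =
        topspace Y - {y \<in> topspace Y. qmap K p y \<in> C}" using qmap_in by blast
  show ?thesis
    unfolding closedin_def topspace_qtop openin_qtop eq
    by (auto simp: closedin_def)
qed

lemma cont_q: "continuous_map Y (qtop Y K p) (qmap K p)"
  unfolding continuous_map_def topspace_qtop openin_qtop using qmap_in by blast

lemma perfect_q: "perfect_map Y (qtop Y K p) (qmap K p)"
  unfolding perfect_map_def proper_map_def
proof (intro conjI ballI)
  show "continuous_map Y (qtop Y K p) (qmap K p)" by (rule cont_q)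
  show "qmap K p ` topspace Y = topspace (qtop Y K p)"
    unfolding topspace_qtop using qmap_in pK KY by (force simp: qmap_def)
  show "closed_map Y (qtop Y K p) (qmap K p)"
    unfolding closed_map_def
  proof (intro allI impI)
    fix C assume C: "closedin Y C"
    have Cs: "C \<subseteq> topspace Y" using C closedin_subset by blast
    show "closedin (qtop Y K p) (qmap K p ` C)"
      unfolding closedin_qtop
    proof
      show "qmap K p ` C \<subseteq> topspace Y - K \<union> {p}" using qmap_in Cs by blast
      show "closedin Y {y \<in> topspace Y. qmap K p y \<in> qmap K p ` C}"
      proof (cases "C \<inter> K = {}")
        case True
        have "{y \<in> topspace Y. qmap K p y \<in> qmap K p ` C} = C"
          using True Cs pK by (auto simp: qmap_def split: if_splits)
        then show ?thesis using C by simp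
      next
        case False
        have "{y \<in> topspace Y. qmap K p y \<in> qmap K p ` C} = C \<union> K"
          using False Cs pK KY by (auto simp: qmap_def split: if_splits)
        then show ?thesis using C cK by (simp add: closedin_Un)
      qed
    qed
  qed
  fix s assume s: "s \<in> topspace (qtop Y K p)"
  show "compactin Y {x \<in> topspace Y. qmap K p x = s}"
  proof (cases "s = p")
    case True
    then have "{x \<in> topspace Y. qmap K p x = s} = K"
      using KY pK by (auto simp: qmap_def split: if_splits)
    then show ?thesis using kK by simp
  next
    case False
    then have "{x \<in> topspace Y. qmap K p x = s} \<subseteq> {s}" by (auto simp: qmap_def split: if_splits)
    then show ?thesis by (intro finite_imp_compactin) (auto intro: finite_subset)
  qed
qed

lemma sub_qtop: assumes "D \<subseteq> topspace Y - K" shows "subtopology (qtop Y K p) D = subtopology Y D"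
proof (rule topology_eq[THEN iffD2], intro allI)
  fix U
  have qD: "\<And>y. y \<in> D \<Longrightarrow> qmap K p y = y" using assms by (auto simp: qmap_def)
  show "openin (subtopology (qtop Y K p) D) U = openin (subtopology Y D) U"
  proof
    assume "openin (subtopology (qtop Y K p) D) U"
    then obtain T where T: "openin (qtop Y K p) T" "U = T \<inter> D" unfolding openin_subtopology by blast
    then have o: "openin Y {y \<in> topspace Y. qmap K p y \<in> T}" unfolding openin_qtop by blast
    have "U = {y \<in> topspace Y. qmap K p y \<in> T} \<inter> D" using T(2) qD assms by auto
    then show "openin (subtopology Y D) U" unfolding openin_subtopology using o by blast
  next
    assume "openin (subtopology Y D) U"
    then obtain T where T: "openin Y T" "U = T \<inter> D" unfolding openin_subtopology by blast
    have oT: "openin Y (T - K)" using T(1) cK by (simp add: openin_diff)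
    have "{y \<in> topspace Y. qmap K p y \<in> T - K} = T - K"
      using pK openin_subset[OF T(1)] by (auto simp: qmap_def)
    then have "openin (qtop Y K p) (T - K)" unfolding openin_qtop using oT openin_subset[OF T(1)] by auto
    moreover have "U = (T - K) \<inter> D" using T(2) assms by blast
    ultimately show "openin (subtopology (qtop Y K p) D) U" unfolding openin_subtopology by blast
  qed
qed

lemma cont_qtop:
  assumes f: "continuous_map Y T f" and fK: "\<And>y. y \<in> K \<Longrightarrow> f y = f p"
  shows "continuous_map (qtop Y K p) T f"
proof (rule continuous_compose_quotient_map[OF perfect_imp_quotient_map[OF perfect_q]])
  show "continuous_map Y T (f \<circ> qmap K p)"
    by (rule continuous_map_eq[OF f]) (use fK in \<open>auto simp: qmap_def\<close>)
qed

lemma tych_qtop: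
  assumes tY: "tychonoff Y"
    and sep: "\<And>D E. closedin Y D \<Longrightarrow> compactin Y E \<Longrightarrow> D \<inter> E = {} \<Longrightarrow>
       \<exists>f. continuous_map Y (top_of_set {0..1::real}) f \<and> f ` E \<subseteq> {0} \<and> f ` D \<subseteq> {1}"
  shows "tychonoff (qtop Y K p)"
proof -
  have HY: "Hausdorff_space Y" using tY unfolding tychonoff_def by simp
  have cr: "completely_regular_space (qtop Y K p)"
    unfolding completely_regular_space_def
  proof (intro allI impI, elim conjE)
    fix C x assume C: "closedin (qtop Y K p) C" and x: "x \<in> topspace (qtop Y K p) - C"
    define D' where "D' = {y \<in> topspace Y. qmap K p y \<in> C}"
    have cD': "closedin Y D'" unfolding D'_def using C unfolding closedin_qtop by blast
    have Cs: "C \<subseteq> topspace Y - K \<union> {p}" using C unfolding closedin_qtop by blast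
    have xs: "x \<in> topspace Y - K \<union> {p}" "x \<notin> C" using x unfolding topspace_qtop by auto
    have fin: "\<exists>f. continuous_map (qtop Y K p) (top_of_set {0..1::real}) f \<and> f x = 0 \<and> f ` C \<subseteq> {1}"
      if E: "compactin Y E" and D: "closedin Y D" and DE: "D \<inter> E = {}" and xE: "x \<in> E"
        and D'D: "D' \<subseteq> D" and KED: "K \<subseteq> E \<or> K \<subseteq> D" for E D
    proof -
      obtain f where f: "continuous_map Y (top_of_set {0..1::real}) f" "f ` E \<subseteq> {0}" "f ` D \<subseteq> {1}"
        using sep[OF D E DE] by blast
      have fK: "f y = f p" if "y \<in> K" for y using KED
      proof
        assume "K \<subseteq> E" then show ?thesis using that pK f(2) by (metis image_subset_iff singletonD subsetD)
      next
        assume "K \<subseteq> D" then show ?thesis using that pK f(3) by (metis image_subset_iff singletonD subsetD)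
      qed
      have "continuous_map (qtop Y K p) (top_of_set {0..1::real}) f" by (rule cont_qtop[OF f(1) fK])
      moreover have "f x = 0" using xE f(2) by auto
      moreover have "f ` C \<subseteq> {1}"
      proof
        fix z assume "z \<in> f ` C"
        then obtain c where c: "c \<in> C" "z = f c" by blast
        show "z \<in> {1}"
        proof (cases "c = p")
          case True
          then have "K \<subseteq> D'" unfolding D'_def using c KY by (auto simp: qmap_def)
          then have "f p \<in> {1}" using pK D'D f(3) by auto
          then show ?thesis using True c by simp
        next
          case False
          then have "c \<in> D'" using c Cs unfolding D'_def by (auto simp: qmap_def)
          then show ?thesis using D'D f(3) c by auto
        qed
      qed
      ultimately show ?thesis by blast
    qed
    show "\<exists>f. continuous_map (qtop Y K p) (top_of_set {0..1::real}) f \<and> f x = 0 \<and> f ` C \<subseteq> {1}"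
    proof (cases "x = p")
      case True
      have "D' \<inter> K = {}" using True xs(2) pK unfolding D'_def by (auto simp: qmap_def)
      then show ?thesis using fin[OF kK cD' _ _ order_refl] True pK by blast
    next
      case xp: False
      then have xY: "x \<in> topspace Y - K" using xs by blast
      have kx: "compactin Y {x}" using xY by simp
      have xD': "x \<notin> D'" using xY xs(2) unfolding D'_def by (auto simp: qmap_def)
      show ?thesis
      proof (cases "p \<in> C")
        case True
        have "K \<subseteq> D'" unfolding D'_def using True KY by (auto simp: qmap_def)
        then show ?thesis using fin[OF kx cD' _ _ order_refl] xD' by blast
      next
        case False
        have "closedin Y (D' \<union> K)" using cD' cK by (simp add: closedin_Un)
        moreover have "(D' \<union> K) \<inter> {x} = {}" using xD' xY by blast
        ultimately show ?thesis using fin[OF kx, of "D' \<union> K"] by blast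
      qed
    qed
  qed
  have t1: "t1_space (qtop Y K p)"
    unfolding t1_space_closedin_singleton
  proof
    fix s assume s: "s \<in> topspace (qtop Y K p)"
    show "closedin (qtop Y K p) {s}"
      unfolding closedin_qtop
    proof
      show "{s} \<subseteq> topspace Y - K \<union> {p}" using s topspace_qtop by simp
      show "closedin Y {y \<in> topspace Y. qmap K p y \<in> {s}}"
      proof (cases "s = p")
        case True
        then have "{y \<in> topspace Y. qmap K p y \<in> {s}} = K"
          using KY pK by (auto simp: qmap_def split: if_splits)
        then show ?thesis using cK by simp
      next
        case False
        then have sY: "s \<in> topspace Y" "s \<notin> K" using s topspace_qtop by auto
        then have "{y \<in> topspace Y. qmap K p y \<in> {s}} = {s}"
          using False by (auto simp: qmap_def split: if_splits)
        then show ?thesis using closedin_Hausdorff_singleton[OF HY sY(1)] by simp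
      qed
    qed
  qed
  have "Hausdorff_space (qtop Y K p)"
    by (rule regular_t1_imp_Hausdorff_space[OF completely_regular_imp_regular_space[OF cr] t1])
  then show ?thesis using cr unfolding tychonoff_def by simp
qed

end



lemma bwd:
  assumes P: "compactness_like P" and tX: "tychonoff X"
    and eY: "is_extension X Y" and cr: "compact_remainder X Y" and cZ: "is_compactification Y Z"
    and sB: "is_stone_cech X B"
    and phi: "continuous_map B Z \<phi>" and phid: "\<forall>x\<in>topspace X. \<phi> x = x"
    and H: "topspace B - lambda_P P X B \<subseteq> {b \<in> topspace B. \<phi> b \<in> topspace Y - topspace X}"
  shows "P Y"
proof -
  define K where "K = topspace Y - topspace X"
  have tY: "tychonoff Y" by (rule comp_tych[OF cZ])
  have kK: "compactin Y K" using cr unfolding K_def compact_remainder_def .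
  have cK: "closedin Y K" using kK tY compactin_imp_closedin unfolding tychonoff_def by blast
  have YZ: "subtopology Z (topspace Y) = Y"
    using cZ unfolding is_compactification_def is_extension_def by auto
  note GG = G[OF P tX eY cr cZ sB phi phid H]
  show ?thesis
  proof (cases "K = {}")
    case True
    have "P (subtopology Y (topspace Y - {}))" by (rule GG) (use True K_def in auto)
    then show ?thesis by simp
  next
    case False
    then obtain p where pK: "p \<in> K" by blast
    define Q where "Q = qtop Y K p"
    have sep: "\<And>D E. closedin Y D \<Longrightarrow> compactin Y E \<Longrightarrow> D \<inter> E = {} \<Longrightarrow>
       \<exists>f. continuous_map Y (top_of_set {0..1::real}) f \<and> f ` E \<subseteq> {0} \<and> f ` D \<subseteq> {1}"
      using Zsep[OF cZ] by blast
    have tQ: "tychonoff Q" unfolding Q_def by (rule tych_qtop[OF cK kK pK tY sep])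
    have pf: "perfect_map Y Q (qmap K p)" unfolding Q_def by (rule perfect_q[OF cK kK pK])
    have tQs: "topspace Q = (topspace Y - K) \<union> {p}" unfolding Q_def by (rule topspace_qtop[OF cK kK pK])
    have W: "mrowka_W P" by (rule CL4[OF P])
    have "P Q"
    proof (rule W[unfolded mrowka_W_def, rule_format, of Q p "{U. openin Q U \<and> p \<in> U}"], intro conjI)
      show "tychonoff Q" by (rule tQ)
      show "p \<in> topspace Q" using tQs by simp
      show "\<forall>B\<in>{U. openin Q U \<and> p \<in> U}. openin Q B \<and> p \<in> B" by blast
      show "\<forall>U. openin Q U \<and> p \<in> U \<longrightarrow> (\<exists>B\<in>{U. openin Q U \<and> p \<in> U}. B \<subseteq> U)" by blast
      show "\<forall>B\<in>{U. openin Q U \<and> p \<in> U}. P (subtopology Q (topspace Q - B))"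
      proof
        fix Bo assume "Bo \<in> {U. openin Q U \<and> p \<in> U}"
        then have Bo: "openin Q Bo" "p \<in> Bo" by auto
        define D where "D = topspace Q - Bo"
        have DK: "D \<subseteq> topspace Y - K" unfolding D_def tQs using Bo(2) by blast
        have sq: "subtopology Q D = subtopology Y D" unfolding Q_def by (rule sub_qtop[OF cK kK pK DK])
        have oV: "openin Y {y \<in> topspace Y. qmap K p y \<in> Bo}"
          using Bo(1) unfolding Q_def openin_qtop by blast
        then obtain T where T: "openin Z T" "{y \<in> topspace Y. qmap K p y \<in> Bo} = T \<inter> topspace Y"
          using YZ openin_subtopology[of Z "topspace Y"] by metis
        have KT: "topspace Y - topspace X \<subseteq> T"
        proof
          fix y assume y: "y \<in> topspace Y - topspace X"
          then have "qmap K p y \<in> Bo" using Bo(2) unfolding K_def qmap_def by simp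
          then show "y \<in> T" using T(2) y by blast
        qed
        have "D = topspace Y - T"
        proof
          show "D \<subseteq> topspace Y - T"
          proof
            fix y assume y: "y \<in> D"
            then have "y \<in> topspace Y - K" "y \<notin> Bo" using DK unfolding D_def by auto
            then have "y \<notin> {y \<in> topspace Y. qmap K p y \<in> Bo}" by (simp add: qmap_def)
            then show "y \<in> topspace Y - T" using T(2) \<open>y \<in> topspace Y - K\<close> by blast
          qed
          show "topspace Y - T \<subseteq> D"
          proof
            fix y assume y: "y \<in> topspace Y - T"
            then have "y \<notin> K" using KT unfolding K_def by blast
            moreover have "qmap K p y \<notin> Bo" using y T(2) by blast
            ultimately show "y \<in> D" using y unfolding D_def tQs by (simp add: qmap_def)
          qed
        qed
        then have "P (subtopology Y D)" using GG[OF T(1) KT] by simp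
        then show "P (subtopology Q (topspace Q - Bo))" using sq unfolding D_def by simp
      qed
    qed
    then show ?thesis using P_perfect[OF P tY tQ pf] by simp
  qed
qed

theorem lemma4p7:
  fixes P :: "'a topology \<Rightarrow> bool"
    and X Y Z B :: "'a topology"
    and \<phi> :: "'a \<Rightarrow> 'a"
  assumes "compactness_like P"
    and "tychonoff X"
    and "is_extension X Y"
    and "compact_remainder X Y"
    and "is_compactification Y Z"
    and "is_stone_cech X B"
    and "continuous_map B Z \<phi>"
    and "\<forall>x\<in>topspace X. \<phi> x = x"
  shows "in_E P X Y \<longleftrightarrow>
           locally_P P X \<and>
           topspace B - lambda_P P X B \<subseteq> {b \<in> topspace B. \<phi> b \<in> topspace Y - topspace X}"
proof
  assume "in_E P X Y"
  then have "P Y" unfolding in_E_def by simp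
  then show "locally_P P X \<and>
           topspace B - lambda_P P X B \<subseteq> {b \<in> topspace B. \<phi> b \<in> topspace Y - topspace X}"
    by (rule fwd[OF assms(1,3,4,5,6,7,8)])
next
  assume "locally_P P X \<and>
           topspace B - lambda_P P X B \<subseteq> {b \<in> topspace B. \<phi> b \<in> topspace Y - topspace X}"
  then have "P Y" using bwd[OF assms] by blast
  then show "in_E P X Y" unfolding in_E_def using assms(3,4) by simp
qed


end
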